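(* Let $n\ge2$ and $T=\alpha_0I+\alpha_1D+\cdots+\alpha_nD^n\in\mathcal L(\mathcal P_n)$ with $\alpha_0\ne0$. For every $f\in\mathcal P_n$ of degree at least $2$ with simple roots, $$\lim_{t\to+\infty}d_F\Bigl(Z\bigl(S(\alpha_1/\alpha_0)H(t)f\bigr),\,Z\bigl(TH(t)f\bigr)\Bigr)=0.$$
   Context: $\mathcal P_n$ is the complex vector space of polynomials of degree at most $n$, $D$ differentiation, $I$ identity. For $\beta\in\mathbb C$, $(S(\beta)f)(z)=f(\beta+z)$; for $t>0$, $(H(t)f)(z)=f(z/t)$. $Z(f)$ denotes the roots of $f$ counted with multiplicity. For multisets $A=\{u_1,\dots,u_m\}$, $B=\{v_1,\dots,v_m\}$ in $\mathbb C$, $d_F(A,B)=\min_{\sigma}\max_k|u_k-v_{\sigma(k)}|$ over permutations $\sigma$ of $\{1,\dots,m\}$. *)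

theory Defs
  imports "HOL-Analysis.Analysis" "HOL-Computational_Algebra.Computational_Algebra"
begin

definition shiftOp :: "complex \<Rightarrow> complex poly \<Rightarrow> complex poly" where
  "shiftOp \<beta> f = pcompose f [:\<beta>, 1:]"

definition dilOp :: "real \<Rightarrow> complex poly \<Rightarrow> complex poly" where
  "dilOp t f = pcompose f [:0, inverse (complex_of_real t):]"

definition diffOp :: "(nat \<Rightarrow> complex) \<Rightarrow> nat \<Rightarrow> complex poly \<Rightarrow> complex poly" where
  "diffOp \<alpha> n f = (\<Sum>k\<le>n. smult (\<alpha> k) ((pderiv ^^ k) f))"

text \<open>Matching distance d_F between multisets: minimum over all enumerations
  (equivalently over all permutations) of the maximal distance of matched points.\<close>
definition dF :: "complex multiset \<Rightarrow> complex multiset \<Rightarrow> real" where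
  "dF A B = Min {Max (insert 0 ((\<lambda>(u, v). cmod (u - v)) ` set (zip xs ys))) | xs ys.
                  mset xs = A \<and> mset ys = B}"

end

theory Submission
  imports Defs
begin


lemma mset_roots_eq:
  fixes p :: "complex poly" and ys :: "complex list"
  assumes "p \<noteq> 0" "length ys = degree p" "distinct ys" "\<forall>y\<in>set ys. poly p y = 0"
  shows "mset ys = proots p"
proof -
  have sub: "mset ys \<subseteq># proots p"
    unfolding subseteq_mset_def
  proof
    fix x
    show "count (mset ys) x \<le> count (proots p) x"
    proof (cases "x \<in> set ys")
      case True
      have "count (mset ys) x \<le> 1" using assms(3) by (simp add: distinct_count_atmost_1)
      moreover have "x \<in># proots p" using True assms(1,4) by auto
      ultimately show ?thesis by (meson count_greater_eq_one_iff order_trans)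
    next
      case False then show ?thesis by (metis count_mset_0_iff le0)
    qed
  qed
  have "size (mset ys) = size (proots p)" using assms(2) by (simp add: size_proots_complex)
  then show ?thesis using sub mset_subset_size subset_mset.le_less by fastforce
qed

lemma prod_lower:
  fixes a :: complex and D :: real
  assumes "0 \<le> D" "\<forall>r\<in>#R. D \<le> cmod (a - r)"
  shows "D ^ size R \<le> cmod (\<Prod>r\<in>#R. (a - r))"
  using assms(2)
proof (induction R)
  case empty then show ?case by simp
next
  case (add x R)
  then have "D ^ size R \<le> cmod (\<Prod>r\<in>#R. (a - r))" "D \<le> cmod (a - x)" by auto
  then have "D * D ^ size R \<le> cmod (a - x) * cmod (\<Prod>r\<in>#R. (a - r))"
    using assms(1) by (simp add: mult_mono)
  then show ?case by (simp add: norm_mult)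
qed

lemma pderiv_dil:
  fixes c :: complex
  shows "(pderiv ^^ j) (pcompose f [:0,c:]) = smult (c^j) (pcompose ((pderiv^^j) f) [:0,c:])"
proof (induction j)
  case 0 then show ?case by simp
next
  case (Suc j)
  show ?case by (simp add: Suc pderiv_smult pderiv_pcompose pderiv_pCons mult.commute)
qed

lemma degree_pderiv_iter: "degree ((pderiv ^^ j) (p::complex poly)) = degree p - j"
  by (induction j) (auto simp: degree_pderiv)


lemma term_deriv:
  fixes Q :: "complex poly" and a z \<beta> :: complex
  shows "((\<lambda>h. a * h^j * poly Q (z - h*\<beta>)) has_field_derivative
     a * (of_nat j * 0^(j-1) * poly Q z + 0^j * (poly (pderiv Q) z * (-\<beta>)))) (at 0)"
proof -
  have P: "((\<lambda>h. poly Q (z - h*\<beta>)) has_field_derivative (poly (pderiv Q) z * (-\<beta>))) (at 0)"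
  proof -
    have l: "((\<lambda>h. z - h*\<beta>) has_field_derivative (-\<beta>)) (at 0)"
      by (auto intro!: derivative_eq_intros)
    show ?thesis using DERIV_chain'[OF l, of "poly Q"] by simp
  qed
  have W: "((\<lambda>h::complex. h^j) has_field_derivative of_nat j * 0^(j-1)) (at 0)"
  proof -
    have W0: "((\<lambda>h::complex. h) has_field_derivative 1) (at 0)" by simp
    show ?thesis using DERIV_power[OF W0, of j] by (simp add: power_0_left)
  qed
  show ?thesis using DERIV_cmult[OF DERIV_mult[OF W P], of a]
    by (simp add: algebra_simps)
qed


lemma G_lim:
  fixes \<alpha> :: "nat \<Rightarrow> complex" and f :: "complex poly" and z \<beta> :: complex
  assumes "n \<ge> 1" "\<alpha> 0 \<noteq> 0" "poly f z = 0" "\<beta> = \<alpha> 1 / \<alpha> 0"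
  defines "G \<equiv> (\<lambda>h. \<Sum>j\<le>n. \<alpha> j * h^j * poly ((pderiv^^j) f) (z - h*\<beta>))"
  shows "((\<lambda>t::real. of_real t * G (inverse (of_real t))) \<longlongrightarrow> 0) at_top"
proof -
  define D where "D = (\<Sum>j\<le>n. \<alpha> j * (of_nat j * 0^(j-1) * poly ((pderiv^^j) f) z
        + 0^j * (poly (pderiv ((pderiv^^j) f)) z * (-\<beta>))))"
  have dG: "(G has_field_derivative D) (at 0)"
    unfolding G_def D_def by (rule DERIV_sum, rule term_deriv)
  obtain n' where n': "n = Suc n'" using assms(1) by (cases n) auto
  have tm: "\<alpha> j * (of_nat j * 0^(j-1) * poly ((pderiv^^j) f) z
        + 0^j * (poly (pderiv ((pderiv^^j) f)) z * (-\<beta>))) =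
      (if j = 0 then \<alpha> 0 * (poly (pderiv f) z * (-\<beta>)) else 0) +
      (if j = 1 then \<alpha> 1 * poly (pderiv f) z else 0)" for j
  proof (cases "j = 0")
    case True then show ?thesis by simp
  next
    case False
    show ?thesis
    proof (cases "j = 1")
      case True then show ?thesis by simp
    next
      case False
      with \<open>j \<noteq> 0\<close> have "j - 1 \<noteq> 0" by simp
      with \<open>j \<noteq> 0\<close> False show ?thesis by (simp add: power_0_left)
    qed
  qed
  have "D = \<alpha> 0 * (poly (pderiv f) z * (-\<beta>)) + \<alpha> 1 * poly (pderiv f) z"
    unfolding D_def tm sum.distrib using assms(1) by simp
  also have "\<dots> = 0" using assms(2,4) by (simp add: field_simps)
  finally have D0: "D = 0" .
  have G0: "G 0 = 0" unfolding G_def n' using assms(3)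
    by (simp add: sum.atMost_shift power_0_left)
  have lim0: "((\<lambda>y. G y / y) \<longlongrightarrow> 0) (at 0)"
    using dG[unfolded has_field_derivative_iff] D0 G0 by simp
  have fl: "filterlim (\<lambda>t::real. inverse (complex_of_real t)) (at 0) at_top"
    unfolding filterlim_at
  proof
    show "\<forall>\<^sub>F t in at_top. inverse (complex_of_real t) \<in> UNIV \<and> inverse (complex_of_real t) \<noteq> 0"
      using eventually_gt_at_top[of "0::real"] by eventually_elim simp
    have "((\<lambda>t::real. complex_of_real (inverse t)) \<longlongrightarrow> of_real 0) at_top"
      by (intro tendsto_of_real tendsto_inverse_0_at_top filterlim_ident)
    then show "((\<lambda>t::real. inverse (complex_of_real t)) \<longlongrightarrow> 0) at_top"
      by (simp add: of_real_inverse)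
  qed
  have "((\<lambda>t. G (inverse (complex_of_real t)) / inverse (complex_of_real t)) \<longlongrightarrow> 0) at_top"
    using filterlim_compose[OF lim0 fl] .
  then show ?thesis by (simp add: divide_inverse mult.commute)
qed


lemma dF_le:
  assumes "mset xs = A" "mset ys = B"
  shows "0 \<le> dF A B \<and> dF A B \<le> Max (insert 0 ((\<lambda>(u, v). cmod (u - v)) ` set (zip xs ys)))"
proof -
  define F where "F = (\<lambda>(xs, ys). Max (insert 0 ((\<lambda>(u, v). cmod (u - v)) ` set (zip xs ys))))"
  define M where "M = {Max (insert 0 ((\<lambda>(u, v). cmod (u - v)) ` set (zip xs ys))) | xs ys.
                  mset xs = A \<and> mset ys = B}"
  have dM: "dF A B = Min M" unfolding dF_def M_def ..
  have "M \<subseteq> F ` ({xs. set xs \<subseteq> set_mset A \<and> length xs = size A} \<times> {ys. set ys \<subseteq> set_mset B \<and> length ys = size B})"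
    unfolding M_def F_def by (auto intro!: image_eqI)
  moreover have "finite ({xs. set xs \<subseteq> set_mset A \<and> length xs = size A} \<times> {ys. set ys \<subseteq> set_mset B \<and> length ys = size B})"
    by (intro finite_cartesian_product finite_lists_length_eq) auto
  ultimately have fin: "finite M" by (meson finite_imageI finite_subset)
  have mem: "Max (insert 0 ((\<lambda>(u, v). cmod (u - v)) ` set (zip xs ys))) \<in> M"
    unfolding M_def using assms by blast
  have nn: "\<forall>x\<in>M. 0 \<le> x" unfolding M_def by (auto intro: Max_ge)
  have "0 \<le> Min M" using fin mem nn by (metis Min_in empty_iff)
  moreover have "Min M \<le> Max (insert 0 ((\<lambda>(u, v). cmod (u - v)) ` set (zip xs ys)))"
    using fin mem by (rule Min_le)
  ultimately show ?thesis using dM by simp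
qed

lemma poly_q:
  fixes c :: complex
  shows "poly (diffOp \<alpha> n (pcompose f [:0,c:])) w = (\<Sum>j\<le>n. \<alpha> j * c^j * poly ((pderiv^^j) f) (c*w))"
  unfolding diffOp_def by (simp add: poly_sum pderiv_dil poly_pcompose mult.assoc mult.commute)

lemma deg_q:
  fixes c :: complex and \<alpha> :: "nat \<Rightarrow> complex"
  assumes "c \<noteq> 0" "\<alpha> 0 \<noteq> 0" "degree f \<ge> 1" "n \<ge> 1"
  shows "degree (diffOp \<alpha> n (pcompose f [:0,c:])) = degree f \<and>
         lead_coeff (diffOp \<alpha> n (pcompose f [:0,c:])) = \<alpha> 0 * lead_coeff f * c ^ degree f"
proof -
  define g where "g = pcompose f [:0,c:]"
  have dg: "degree g = degree f" unfolding g_def using assms(1) by (simp add: degree_pcompose)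
  have lg: "lead_coeff g = lead_coeff f * c ^ degree f" unfolding g_def using assms(1)
    by (subst lead_coeff_comp) auto
  obtain n' where n': "n = Suc n'" using assms(4) by (cases n) auto
  have split: "diffOp \<alpha> n g = smult (\<alpha> 0) g + (\<Sum>i\<le>n'. smult (\<alpha> (Suc i)) ((pderiv ^^ Suc i) g))"
    unfolding diffOp_def n' by (simp only: sum.atMost_Suc_shift funpow_0)
  have "degree (\<Sum>i\<le>n'. smult (\<alpha> (Suc i)) ((pderiv ^^ Suc i) g)) < degree g"
  proof -
    have "degree (\<Sum>i\<le>n'. smult (\<alpha> (Suc i)) ((pderiv ^^ Suc i) g)) \<le> degree g - 1"
      by (rule degree_sum_le) (auto intro: order_trans[OF degree_smult_le] simp: degree_pderiv_iter degree_pderiv)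
    then show ?thesis using dg assms(3) by linarith
  qed
  moreover have "degree (smult (\<alpha> 0) g) = degree g" using assms(2) by simp
  ultimately have "degree (diffOp \<alpha> n g) = degree g \<and> lead_coeff (diffOp \<alpha> n g) = \<alpha> 0 * lead_coeff g"
    unfolding split by (simp add: degree_add_eq_left lead_coeff_add_le coeff_eq_0)
  then show ?thesis using dg lg unfolding g_def by (metis mult.assoc)
qed


theorem corollary4p5:
  fixes n :: nat and \<alpha> :: "nat \<Rightarrow> complex" and f :: "complex poly"
  assumes "n \<ge> 2" and "\<alpha> 0 \<noteq> 0"
    and "degree f \<le> n" and "degree f \<ge> 2" and "rsquarefree f"
  shows "((\<lambda>t. dF (proots (shiftOp (\<alpha> 1 / \<alpha> 0) (dilOp t f)))
                   (proots (diffOp \<alpha> n (dilOp t f)))) \<longlongrightarrow> 0) at_top"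
proof -
  define \<beta> where "\<beta> = \<alpha> 1 / \<alpha> 0"
  define m where "m = degree f"
  have m2: "m \<ge> 2" using assms(4) m_def by simp
  have f0: "f \<noteq> 0" using assms(4) by auto
  obtain zs where zs: "mset zs = proots f" using ex_mset by blast
  have cnt: "count (mset zs) a \<le> 1" for a
    using zs assms(5) f0 unfolding rsquarefree_def by (metis count_proots le_refl zero_le)
  have dzs: "distinct zs" unfolding distinct_count_atmost_1
  proof
    fix a
    show "count (mset zs) a = (if a \<in> set zs then 1 else 0)"
      using cnt[of a] count_mset_0_iff[of zs a] by (cases "count (mset zs) a") auto
  qed
  have lzs: "length zs = m" using zs size_proots_complex[of f] m_def
    by (metis size_mset)
  have szs: "set zs = {z. poly f z = 0}" using zs f0 by (metis set_count_proots set_mset_mset)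
  define S where "S = (\<lambda>(z,z'). cmod (z - z')) ` {p \<in> set zs \<times> set zs. fst p \<noteq> snd p}"
  have finS: "finite S" unfolding S_def by auto
  define sep where "sep = Min (insert 1 S)"
  have Spos: "\<forall>x\<in>S. 0 < x" unfolding S_def by auto
  have sep_pos: "sep > 0" unfolding sep_def using finS Spos by simp
  have sep_le: "sep \<le> cmod (z - z')" if "z \<in> set zs" "z' \<in> set zs" "z \<noteq> z'" for z z'
  proof -
    have "cmod (z - z') \<in> S" unfolding S_def using that by (auto intro!: image_eqI[of _ _ "(z,z')"])
    then show ?thesis unfolding sep_def using finS by simp
  qed
  define \<delta> where "\<delta> = sep / 2"
  have \<delta>_pos: "\<delta> > 0" using sep_pos \<delta>_def by simp
  define K where "K = cmod (\<alpha> 0 * lead_coeff f)"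
  have K_pos: "K > 0" unfolding K_def using assms(2) f0 by simp
  define Gz where "Gz = (\<lambda>z h. \<Sum>j\<le>n. \<alpha> j * h^j * poly ((pderiv^^j) f) (z - h*\<beta>))"
  have Glim: "((\<lambda>t::real. of_real t * Gz z (inverse (of_real t))) \<longlongrightarrow> 0) at_top"
    if "z \<in> set zs" for z
    unfolding Gz_def using assms(1,2) that szs \<beta>_def by (intro G_lim) auto
  show ?thesis unfolding tendsto_iff
  proof (intro allI impI)
    fix \<epsilon> :: real assume \<epsilon>: "\<epsilon> > 0"
    define B where "B = K * \<delta>^(m-1) * min \<epsilon> \<delta>"
    have B_pos: "B > 0" unfolding B_def using K_pos \<delta>_pos \<epsilon> by simp
    have ev1: "\<forall>\<^sub>F t in at_top. \<forall>z\<in>set zs. cmod (of_real t * Gz z (inverse (of_real t))) < B"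
    proof (rule eventually_ball_finite)
      show "finite (set zs)" by simp
      show "\<forall>z\<in>set zs. \<forall>\<^sub>F t in at_top. cmod (of_real t * Gz z (inverse (of_real t))) < B"
      proof
        fix z assume "z \<in> set zs"
        from Glim[OF this, unfolded tendsto_iff, rule_format, OF B_pos]
        show "\<forall>\<^sub>F t in at_top. cmod (of_real t * Gz z (inverse (of_real t))) < B" by simp
      qed
    qed
    have main: "dist (dF (proots (shiftOp (\<alpha> 1 / \<alpha> 0) (dilOp t f)))
                   (proots (diffOp \<alpha> n (dilOp t f)))) 0 < \<epsilon>"
      if t1: "t \<ge> 1" and H: "\<forall>z\<in>set zs. cmod (of_real t * Gz z (inverse (of_real t))) < B" for t
    proof -
      define c where "c = inverse (complex_of_real t)"
      have c0: "c \<noteq> 0" unfolding c_def using t1 by simp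
      have ct: "c * of_real t = 1" unfolding c_def using t1 by simp
      define g where "g = pcompose f [:0,c:]"
      have g_eq: "dilOp t f = g" unfolding dilOp_def g_def c_def ..
      define q where "q = diffOp \<alpha> n g"
      have dq: "degree q = m" and lq: "lead_coeff q = \<alpha> 0 * lead_coeff f * c ^ m"
        using deg_q[where c=c and \<alpha>=\<alpha> and f=f and n=n] c0 assms(2) assms(1,4) unfolding q_def g_def m_def by auto
      have q0: "q \<noteq> 0" using dq m2 by auto
      have nlq: "cmod (lead_coeff q) = K / t^m"
        unfolding lq K_def c_def using t1 by (simp add: norm_mult norm_power divide_inverse power_inverse norm_inverse)
      have fac: "poly q w = lead_coeff q * (\<Prod>r\<in>#proots q. (w - r))" for w
      proof -
        have "poly q w = poly (smult (lead_coeff q) (\<Prod>x\<in>#proots q. [:-x, 1:])) w"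
          by (simp only: complex_poly_decompose_multiset)
        also have "\<dots> = lead_coeff q * (\<Prod>r\<in>#proots q. (w - r))"
          by (simp add: poly_prod_mset)
        finally show ?thesis .
      qed
      define \<phi> where "\<phi> = (\<lambda>z. of_real t * z - \<beta>)"
      have qphi: "poly q (\<phi> z) = Gz z c" for z
      proof -
        have "c * \<phi> z = z - c * \<beta>" unfolding \<phi>_def using ct by (simp add: algebra_simps)
        then show ?thesis unfolding q_def g_def Gz_def poly_q by simp
      qed
      have Gsmall: "t * cmod (Gz z c) < B" if "z \<in> set zs" for z
        using H that t1 unfolding c_def by (simp add: norm_mult)
      have sizeR: "size (proots q) = m" using dq size_proots_complex by simp
      have stage1: "\<exists>r\<in>#proots q. cmod (\<phi> z - r) < t * \<delta>" if z: "z \<in> set zs" for z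
      proof (rule ccontr)
        assume "\<not> ?thesis"
        then have "\<forall>r\<in>#proots q. t * \<delta> \<le> cmod (\<phi> z - r)" by auto
        from prod_lower[OF _ this] t1 \<delta>_pos
        have pl: "(t * \<delta>) ^ m \<le> cmod (\<Prod>r\<in>#proots q. (\<phi> z - r))" using sizeR by simp
        have "K * \<delta>^m = K / t^m * (t * \<delta>) ^ m" using t1 by (simp add: power_mult_distrib)
        also have "\<dots> \<le> K / t^m * cmod (\<Prod>r\<in>#proots q. (\<phi> z - r))"
          using pl K_pos t1 by (intro mult_left_mono) auto
        also have "\<dots> = cmod (Gz z c)" using fac[of "\<phi> z"] qphi[of z] nlq by (simp add: norm_mult)
        also have "\<dots> \<le> t * cmod (Gz z c)" using t1 by (simp add: mult_le_cancel_right1)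
        also have "\<dots> < B" using Gsmall[OF z] .
        also have "B \<le> K * \<delta>^(m-1) * \<delta>" unfolding B_def using K_pos \<delta>_pos
          by (intro mult_left_mono) auto
        also have "\<dots> = K * \<delta>^m" using m2 by (simp add: power_eq_if)
        finally show False by simp
      qed
      obtain rr where rr: "\<And>z. z \<in> set zs \<Longrightarrow> rr z \<in># proots q \<and> cmod (\<phi> z - rr z) < t * \<delta>"
        using stage1 by metis
      have phisep: "2 * t * \<delta> \<le> cmod (\<phi> z - \<phi> z')" if "z \<in> set zs" "z' \<in> set zs" "z \<noteq> z'" for z z'
      proof -
        have "\<phi> z - \<phi> z' = of_real t * (z - z')" unfolding \<phi>_def by (simp add: algebra_simps)
        then have "cmod (\<phi> z - \<phi> z') = t * cmod (z - z')" using t1 by (simp add: norm_mult)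
        moreover have "t * sep \<le> t * cmod (z - z')" using sep_le[OF that] t1 by simp
        ultimately show ?thesis unfolding \<delta>_def by simp
      qed
      have tri: "cmod (a - b) \<le> cmod (a - r) + cmod (b - r)" for a b r :: complex
        using norm_triangle_ineq4[of "a - r" "b - r"] by simp
      have inj_rr: "inj_on rr (set zs)"
      proof (rule inj_onI, rule ccontr)
        fix z z' assume z: "z \<in> set zs" "z' \<in> set zs" "rr z = rr z'" "z \<noteq> z'"
        have "cmod (\<phi> z - \<phi> z') \<le> cmod (\<phi> z - rr z) + cmod (\<phi> z' - rr z)" by (rule tri)
        also have "\<dots> < t * \<delta> + t * \<delta>"
        proof -
          have a: "cmod (\<phi> z - rr z) < t * \<delta>" using rr[OF z(1)] by simp
          have b: "cmod (\<phi> z' - rr z) < t * \<delta>" using rr[OF z(2)] z(3) by simp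
          from a b show ?thesis by linarith
        qed
        finally show False using phisep[OF z(1,2,4)] by (simp add: ac_simps)
      qed
      have inj_phi: "inj_on \<phi> (set zs)"
        by (rule inj_onI) (use t1 in \<open>simp add: \<phi>_def\<close>)
      define ys where "ys = map rr zs"
      define xs where "xs = map \<phi> zs"
      have mys: "mset ys = proots q"
        by (rule mset_roots_eq)
           (use q0 dq lzs dzs inj_rr rr in \<open>auto simp: ys_def distinct_map\<close>)
      define s where "s = shiftOp (\<alpha> 1 / \<alpha> 0) g"
      have polys: "poly s w = poly f (c * (\<beta> + w))" for w
        unfolding s_def shiftOp_def g_def \<beta>_def by (simp add: poly_pcompose algebra_simps)
      have ds: "degree s = m" unfolding s_def shiftOp_def g_def m_def using c0
        by (simp add: degree_pcompose)
      have s0: "s \<noteq> 0" using ds m2 by auto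
      have mxs: "mset xs = proots s"
      proof (rule mset_roots_eq)
        show "\<forall>y\<in>set xs. poly s y = 0"
        proof
          fix y assume "y \<in> set xs"
          then obtain z where z: "z \<in> set zs" "y = \<phi> z" unfolding xs_def by auto
          have "c * (\<beta> + \<phi> z) = z" unfolding \<phi>_def using ct by (simp add: algebra_simps)
          then show "poly s y = 0" using z szs polys by simp
        qed
      qed (use s0 ds lzs dzs inj_phi in \<open>auto simp: xs_def distinct_map\<close>)
      have stage2: "cmod (\<phi> z - rr z) < \<epsilon>" if z: "z \<in> set zs" for z
      proof -
        define R' where "R' = mset zs - {#z#}"
        have zR: "mset zs = add_mset z R'" unfolding R'_def using z by simp
        have znR: "z \<notin># R'"
        proof
          assume "z \<in># R'"
          then have "count (mset zs) z \<ge> 2" unfolding zR by simp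
          with cnt[of z] show False by simp
        qed
        have Rq: "proots q = add_mset (rr z) (image_mset rr R')"
          using mys unfolding ys_def by (simp add: zR)
        have far: "\<forall>r\<in>#image_mset rr R'. t * \<delta> \<le> cmod (\<phi> z - r)"
        proof
          fix r assume "r \<in># image_mset rr R'"
          then obtain z' where z': "z' \<in># R'" "r = rr z'" by auto
          have z'z: "z' \<noteq> z" using z' znR by auto
          have z's: "z' \<in> set zs" using z' zR by (metis in_diffD R'_def set_mset_mset)
          have "2 * t * \<delta> \<le> cmod (\<phi> z - \<phi> z')" using phisep[OF z z's] z'z by simp
          also have "\<dots> \<le> cmod (\<phi> z - r) + cmod (\<phi> z' - r)" by (rule tri)
          finally show "t * \<delta> \<le> cmod (\<phi> z - r)" using rr[OF z's] z'(2) by simp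
        qed
        have szR: "size (image_mset rr R') = m - 1" using zR lzs by (metis size_mset size_add_mset size_image_mset diff_Suc_1)
        from prod_lower[OF _ far] t1 \<delta>_pos
        have pl: "(t * \<delta>) ^ (m-1) \<le> cmod (\<Prod>r\<in>#image_mset rr R'. (\<phi> z - r))" using szR by simp
        define d where "d = cmod (\<phi> z - rr z)"
        have tm: "t ^ m = t * t^(m-1)" using m2 by (simp add: power_eq_if)
        have "K * \<delta>^(m-1) * d / t = K / t^m * d * (t * \<delta>) ^ (m-1)"
          using t1 by (simp add: tm power_mult_distrib field_simps)
        also have "\<dots> \<le> K / t^m * d * cmod (\<Prod>r\<in>#image_mset rr R'. (\<phi> z - r))"
          using pl K_pos t1 by (intro mult_left_mono) (auto simp: d_def)
        also have "\<dots> = cmod (Gz z c)"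
          using fac[of "\<phi> z"] qphi[of z] nlq unfolding Rq d_def by (simp add: norm_mult)
        finally have "K * \<delta>^(m-1) * d \<le> t * cmod (Gz z c)" using t1 by (simp add: field_simps)
        also have "\<dots> < B" using Gsmall[OF z] .
        also have "B \<le> K * \<delta>^(m-1) * \<epsilon>" unfolding B_def using K_pos \<delta>_pos
          by (intro mult_left_mono) auto
        finally show ?thesis unfolding d_def using K_pos \<delta>_pos by simp
      qed
      have bnd: "Max (insert 0 ((\<lambda>(u, v). cmod (u - v)) ` set (zip xs ys))) < \<epsilon>"
      proof -
        have "\<forall>p\<in>set (zip xs ys). (\<lambda>(u, v). cmod (u - v)) p < \<epsilon>"
        proof
          fix p assume "p \<in> set (zip xs ys)"
          then obtain i where i: "i < length zs" "p = (xs ! i, ys ! i)"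
            unfolding set_zip xs_def ys_def by auto
          have "zs ! i \<in> set zs" using i by simp
          then show "(\<lambda>(u, v). cmod (u - v)) p < \<epsilon>" using stage2 i unfolding xs_def ys_def by simp
        qed
        then show ?thesis using \<epsilon> by simp
      qed
      have "0 \<le> dF (proots s) (proots q) \<and> dF (proots s) (proots q) \<le> Max (insert 0 ((\<lambda>(u, v). cmod (u - v)) ` set (zip xs ys)))"
        by (rule dF_le[OF mxs mys])
      then show ?thesis using bnd unfolding s_def q_def g_eq by (simp del: Max_less_iff add: dist_real_def)
    qed
    show "\<forall>\<^sub>F t in at_top. dist (dF (proots (shiftOp (\<alpha> 1 / \<alpha> 0) (dilOp t f)))
                   (proots (diffOp \<alpha> n (dilOp t f)))) 0 < \<epsilon>"
      using ev1 eventually_ge_at_top[of "1::real"] by eventually_elim (rule main)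
  qed
qed

end
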